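(* Let $X$ be a compactum, let $n\geq2$, and let $f:X\to X$ be a function. Consider the statements: (1) $f$ is two-sided transitive; (2) $F_n(f)$ is two-sided transitive; (3) $SF_n(f)$ is two-sided transitive. Then (2) and (3) are equivalent, and (2) implies (1).
   Context: A compactum is a nondegenerate compact, perfect, Hausdorff topological space. $F_n(X)$ is the set of nonempty subsets of $X$ with at most $n$ points, with the Vietoris topology; $F_1(X)=\{\{x\}:x\in X\}$; $F_n(f)(A)=f(A)$. $SF_n(X)=F_n(X)/F_1(X)$ is the quotient collapsing $F_1(X)$ to a point, $q$ the quotient map, $F_X=q(F_1(X))$, and $SF_n(f)(\chi)=q(F_n(f)(q^{-1}(\chi)))$ for $\chi\neq F_X$, $SF_n(f)(F_X)=F_X$. A function $g:Z\to Z$ is two-sided transitive if $g$ is a homeomorphism and there is $z\in Z$ such that $\{g^k(z):k\in\mathbb{Z}\}$ is dense in $Z$. *)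

theory Defs
  imports "HOL-Analysis.Analysis"
begin

definition compactum :: "'a topology \<Rightarrow> bool" where
  "compactum X \<longleftrightarrow> compact_space X \<and> Hausdorff_space X
     \<and> (\<forall>x\<in>topspace X. \<not> openin X {x})
     \<and> (\<exists>x y. x \<in> topspace X \<and> y \<in> topspace X \<and> x \<noteq> y)"

definition Fn_set :: "nat \<Rightarrow> 'a topology \<Rightarrow> 'a set set" where
  "Fn_set n X = {A. A \<subseteq> topspace X \<and> A \<noteq> {} \<and> finite A \<and> card A \<le> n}"

definition F1_set :: "'a topology \<Rightarrow> 'a set set" where
  "F1_set X = {{x} | x. x \<in> topspace X}"

definition Fn_top :: "nat \<Rightarrow> 'a topology \<Rightarrow> 'a set topology" where
  "Fn_top n X = subtopology
     (topology_generated_by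
        ({{A \<in> Fn_set n X. A \<subseteq> U} | U. openin X U}
         \<union> {{A \<in> Fn_set n X. A \<inter> U \<noteq> {}} | U. openin X U}))
     (Fn_set n X)"

definition Fn_map :: "('a \<Rightarrow> 'a) \<Rightarrow> 'a set \<Rightarrow> 'a set" where
  "Fn_map f A = f ` A"

text \<open>The quotient map q : F_n(X) \<rightarrow> SF_n(X), points of SF_n(X) being the
  equivalence classes (F_1(X) is one class, every other point is its own class).\<close>
definition q_map :: "'a topology \<Rightarrow> 'a set \<Rightarrow> 'a set set" where
  "q_map X A = (if A \<in> F1_set X then F1_set X else {A})"

definition SFn_top :: "nat \<Rightarrow> 'a topology \<Rightarrow> 'a set set topology" where
  "SFn_top n X = topology (\<lambda>V. V \<subseteq> q_map X ` Fn_set n X \<and>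
      openin (Fn_top n X) {A \<in> Fn_set n X. q_map X A \<in> V})"

text \<open>SF_n(f)(\<chi>) = q(F_n(f)(q^{-1}(\<chi>))) for \<chi> \<noteq> F_X, and SF_n(f)(F_X) = F_X.
  For \<chi> \<noteq> F_X, q^{-1}(\<chi>) is the single point the_elem \<chi>.\<close>
definition SFn_map :: "'a topology \<Rightarrow> ('a \<Rightarrow> 'a) \<Rightarrow> 'a set set \<Rightarrow> 'a set set" where
  "SFn_map X f c = (if c = F1_set X then F1_set X
                     else q_map X (Fn_map f (the_elem c)))"

definition two_sided_transitive :: "'b topology \<Rightarrow> ('b \<Rightarrow> 'b) \<Rightarrow> bool" where
  "two_sided_transitive Z g \<longleftrightarrow> homeomorphic_map Z Z g \<and>
     (\<exists>z\<in>topspace Z.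
        Z closure_of ({(g ^^ k) z | k. True} \<union> {(inv_into (topspace Z) g ^^ k) z | k. True})
          = topspace Z)"


lemma istopology_SFn:
  "istopology (\<lambda>V. V \<subseteq> q_map X ` Fn_set n X \<and>
      openin (Fn_top n X) {A \<in> Fn_set n X. q_map X A \<in> V})"
proof -
  show ?thesis
    unfolding istopology_def
  proof (rule conjI; intro allI impI)
    fix S T assume a: "S \<subseteq> q_map X ` Fn_set n X \<and> openin (Fn_top n X) {A \<in> Fn_set n X. q_map X A \<in> S}"
      "T \<subseteq> q_map X ` Fn_set n X \<and> openin (Fn_top n X) {A \<in> Fn_set n X. q_map X A \<in> T}"
    have "{A \<in> Fn_set n X. q_map X A \<in> S \<inter> T} = {A \<in> Fn_set n X. q_map X A \<in> S} \<inter> {A \<in> Fn_set n X. q_map X A \<in> T}" by auto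
    then show "S \<inter> T \<subseteq> q_map X ` Fn_set n X \<and> openin (Fn_top n X) {A \<in> Fn_set n X. q_map X A \<in> S \<inter> T}"
      using a by auto
  next
    fix K assume a: "\<forall>S\<in>K. S \<subseteq> q_map X ` Fn_set n X \<and> openin (Fn_top n X) {A \<in> Fn_set n X. q_map X A \<in> S}"
    have "{A \<in> Fn_set n X. q_map X A \<in> \<Union>K} = (\<Union>S\<in>K. {A \<in> Fn_set n X. q_map X A \<in> S})" by auto
    then show "\<Union>K \<subseteq> q_map X ` Fn_set n X \<and> openin (Fn_top n X) {A \<in> Fn_set n X. q_map X A \<in> \<Union>K}"
      using a by auto
  qed
qed

end

theory Submission
  imports Defs
begin

lemma topspace_Fn: "topspace (Fn_top n X) = Fn_set n X"
proof -
  let ?S = "{{A \<in> Fn_set n X. A \<subseteq> U} | U. openin X U}"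
  have "{B \<in> Fn_set n X. B \<subseteq> topspace X} \<in> ?S" apply (rule CollectI) apply (rule exI[of _ "topspace X"]) apply (rule conjI[OF refl openin_topspace]) done
  moreover have "{B \<in> Fn_set n X. B \<subseteq> topspace X} = Fn_set n X" by (auto simp: Fn_set_def)
  ultimately have "Fn_set n X \<subseteq> \<Union>(?S \<union> {{A \<in> Fn_set n X. A \<inter> U \<noteq> {}} | U. openin X U})"
    by (intro Union_upper UnI1) simp
  then show ?thesis unfolding Fn_top_def topspace_subtopology topology_generated_by_topspace
    by (rule Int_absorb1)
qed
lemma openin_Fn_sub: "openin X U \<Longrightarrow> openin (Fn_top n X) {A\<in>Fn_set n X. A \<subseteq> U}"
  unfolding Fn_top_def openin_subtopology openin_topology_generated_by_iff
  by (rule exI[of _ "{A\<in>Fn_set n X. A \<subseteq> U}"]) (auto intro!: generate_topology_on.Basis)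

lemma openin_Fn_meet: "openin X U \<Longrightarrow> openin (Fn_top n X) {A\<in>Fn_set n X. A \<inter> U \<noteq> {}}"
  unfolding Fn_top_def openin_subtopology openin_topology_generated_by_iff
  by (rule exI[of _ "{A\<in>Fn_set n X. A \<inter> U \<noteq> {}}"]) (auto intro!: generate_topology_on.Basis)

lemma continuous_into_Fn:
  assumes g: "\<And>y. y \<in> topspace Y \<Longrightarrow> g y \<in> Fn_set n X"
    and s: "\<And>U. openin X U \<Longrightarrow> openin Y {y\<in>topspace Y. g y \<subseteq> U}"
    and m: "\<And>U. openin X U \<Longrightarrow> openin Y {y\<in>topspace Y. g y \<inter> U \<noteq> {}}"
  shows "continuous_map Y (Fn_top n X) g"
proof -
  have gen: "openin Y {y\<in>topspace Y. g y \<in> T}"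
    if "generate_topology_on ({{A \<in> Fn_set n X. A \<subseteq> U} | U. openin X U}
         \<union> {{A \<in> Fn_set n X. A \<inter> U \<noteq> {}} | U. openin X U}) T" for T
    using that
  proof (induction rule: generate_topology_on.induct)
    case Empty
    then show ?case by simp
  next
    case (Int a b)
    have "{y \<in> topspace Y. g y \<in> a \<inter> b} = {y \<in> topspace Y. g y \<in> a} \<inter> {y \<in> topspace Y. g y \<in> b}" by auto
    then show ?case using Int by auto
  next
    case (UN K)
    have "{y \<in> topspace Y. g y \<in> \<Union>K} = (\<Union>k\<in>K. {y \<in> topspace Y. g y \<in> k})" by auto
    then show ?case using UN by auto
  next
    case (Basis s)
    then consider U where "openin X U" "s = {A \<in> Fn_set n X. A \<subseteq> U}"
      | U where "openin X U" "s = {A \<in> Fn_set n X. A \<inter> U \<noteq> {}}" by blast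
    then show ?case
    proof cases
      case 1
      then have "{y \<in> topspace Y. g y \<in> s} = {y\<in>topspace Y. g y \<subseteq> U}" using g by auto
      then show ?thesis using s 1 by simp
    next
      case 2
      then have "{y \<in> topspace Y. g y \<in> s} = {y\<in>topspace Y. g y \<inter> U \<noteq> {}}" using g by auto
      then show ?thesis using m 2 by simp
    qed
  qed
  show ?thesis
    unfolding continuous_map_def
  proof (intro conjI allI impI)
    show "g \<in> topspace Y \<rightarrow> topspace (Fn_top n X)" using g by (auto simp: topspace_Fn)
  next
    fix U assume "openin (Fn_top n X) U"
    then obtain T where T: "generate_topology_on ({{A \<in> Fn_set n X. A \<subseteq> U} | U. openin X U}
         \<union> {{A \<in> Fn_set n X. A \<inter> U \<noteq> {}} | U. openin X U}) T" "U = T \<inter> Fn_set n X"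
      unfolding Fn_top_def openin_subtopology openin_topology_generated_by_iff by blast
    then have "{x \<in> topspace Y. g x \<in> U} = {y\<in>topspace Y. g y \<in> T}" using g by auto
    then show "openin Y {x \<in> topspace Y. g x \<in> U}" using gen[OF T(1)] by simp
  qed
qed

lemma openin_SF: "openin (SFn_top n X) V \<longleftrightarrow>
   V \<subseteq> q_map X ` Fn_set n X \<and> openin (Fn_top n X) {A\<in>Fn_set n X. q_map X A \<in> V}"
  unfolding SFn_top_def topology_inverse'[OF istopology_SFn] by (rule refl)

lemma topspace_SF: "topspace (SFn_top n X) = q_map X ` Fn_set n X"
proof -
  have "openin (SFn_top n X) (q_map X ` Fn_set n X)"
  proof -
    have "{A\<in>Fn_set n X. q_map X A \<in> q_map X ` Fn_set n X} = Fn_set n X" by blast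
    then show ?thesis unfolding openin_SF using openin_topspace[of "Fn_top n X"] by (simp add: topspace_Fn)
  qed
  then have "q_map X ` Fn_set n X \<subseteq> topspace (SFn_top n X)" by (rule openin_subset)
  moreover have "topspace (SFn_top n X) \<subseteq> q_map X ` Fn_set n X"
    using openin_topspace[of "SFn_top n X"] unfolding openin_SF by blast
  ultimately show ?thesis by blast
qed

lemma q_cont: "continuous_map (Fn_top n X) (SFn_top n X) (q_map X)"
  unfolding continuous_map_def
proof (intro conjI allI impI)
  show "q_map X \<in> topspace (Fn_top n X) \<rightarrow> topspace (SFn_top n X)"
    by (auto simp: topspace_Fn topspace_SF)
  fix V assume "openin (SFn_top n X) V"
  then show "openin (Fn_top n X) {x \<in> topspace (Fn_top n X). q_map X x \<in> V}"
    unfolding openin_SF topspace_Fn by blast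
qed

lemma F1_ne:
  assumes "compactum X" shows "F1_set X \<noteq> {A}"
proof
  assume h: "F1_set X = {A}"
  obtain x y where "x \<in> topspace X" "y \<in> topspace X" "x \<noteq> y"
    using assms unfolding compactum_def by blast
  then have "{x} \<in> F1_set X" "{y} \<in> F1_set X" unfolding F1_set_def by blast+
  with h \<open>x \<noteq> y\<close> show False by auto
qed

lemma q_F1: "A \<in> F1_set X \<Longrightarrow> q_map X A = F1_set X"
  by (simp add: q_map_def)

lemma q_nF1: "A \<notin> F1_set X \<Longrightarrow> q_map X A = {A}"
  by (simp add: q_map_def)

lemma q_eq:
  assumes "compactum X" "q_map X A = q_map X B" "B \<notin> F1_set X"
  shows "A = B"
proof (cases "A \<in> F1_set X")
  case True
  then show ?thesis using assms F1_ne[OF assms(1), of B] by (simp add: q_map_def)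
next
  case False
  then show ?thesis using assms by (simp add: q_map_def)
qed

lemma q_neq_F1:
  assumes "compactum X" "B \<notin> F1_set X" shows "q_map X B \<noteq> F1_set X"
  using assms F1_ne[OF assms(1), of B] by (simp add: q_map_def)

lemma F1_sub_Fn: "n \<ge> 1 \<Longrightarrow> F1_set X \<subseteq> Fn_set n X"
  by (auto simp: F1_set_def Fn_set_def)

lemma sing_Fn: "n \<ge> 1 \<Longrightarrow> x \<in> topspace X \<Longrightarrow> {x} \<in> Fn_set n X"
  by (auto simp: Fn_set_def)

lemma pair_Fn: "n \<ge> 2 \<Longrightarrow> x \<in> topspace X \<Longrightarrow> y \<in> topspace X \<Longrightarrow> {x,y} \<in> Fn_set n X"
  by (auto simp: Fn_set_def card_insert_if)

lemma Fn_map_Fn: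
  assumes "f \<in> topspace X \<rightarrow> topspace X" "A \<in> Fn_set n X"
  shows "Fn_map f A \<in> Fn_set n X"
proof -
  have "card (f ` A) \<le> card A" using assms(2) by (intro card_image_le) (auto simp: Fn_set_def)
  then show ?thesis using assms by (auto simp: Fn_set_def Fn_map_def)
qed

lemma Fn_map_F1: "f \<in> topspace X \<rightarrow> topspace X \<Longrightarrow> A \<in> F1_set X \<Longrightarrow> Fn_map f A \<in> F1_set X"
  by (auto simp: F1_set_def Fn_map_def)

lemma SF_q:
  assumes "compactum X" "f \<in> topspace X \<rightarrow> topspace X"
  shows "SFn_map X f (q_map X A) = q_map X (Fn_map f A)"
proof (cases "A \<in> F1_set X")
  case True
  then show ?thesis using Fn_map_F1[OF assms(2) True] by (simp add: q_map_def SFn_map_def)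
next
  case False
  then show ?thesis using q_neq_F1[OF assms(1) False] by (simp add: q_nF1 SFn_map_def)
qed

lemma Fn_map_cont:
  assumes "continuous_map X X f"
  shows "continuous_map (Fn_top n X) (Fn_top n X) (Fn_map f)"
proof (rule continuous_into_Fn)
  have fm: "f \<in> topspace X \<rightarrow> topspace X" using assms by (simp add: continuous_map_def)
  show "\<And>y. y \<in> topspace (Fn_top n X) \<Longrightarrow> Fn_map f y \<in> Fn_set n X"
    using Fn_map_Fn[OF fm] by (simp add: topspace_Fn)
  fix U assume U: "openin X U"
  let ?P = "{x \<in> topspace X. f x \<in> U}"
  have P: "openin X ?P" using openin_continuous_map_preimage[OF assms U] .
  have "{y \<in> topspace (Fn_top n X). Fn_map f y \<subseteq> U} = {A\<in>Fn_set n X. A \<subseteq> ?P}"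
    by (auto simp: topspace_Fn Fn_map_def Fn_set_def)
  then show "openin (Fn_top n X) {y \<in> topspace (Fn_top n X). Fn_map f y \<subseteq> U}"
    using openin_Fn_sub[OF P] by simp
  have "{y \<in> topspace (Fn_top n X). Fn_map f y \<inter> U \<noteq> {}} = {A\<in>Fn_set n X. A \<inter> ?P \<noteq> {}}"
    by (auto simp: topspace_Fn Fn_map_def Fn_set_def)
  then show "openin (Fn_top n X) {y \<in> topspace (Fn_top n X). Fn_map f y \<inter> U \<noteq> {}}"
    using openin_Fn_meet[OF P] by simp
qed

lemma pair_cont:
  assumes "n \<ge> 2" "x \<in> topspace X"
  shows "continuous_map X (Fn_top n X) (\<lambda>y. {x,y})"
proof (rule continuous_into_Fn)
  show "\<And>y. y \<in> topspace X \<Longrightarrow> {x, y} \<in> Fn_set n X" using pair_Fn[OF assms(1,2)] .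
  fix U assume U: "openin X U"
  have sub: "U \<subseteq> topspace X" using openin_subset[OF U] .
  show "openin X {y \<in> topspace X. {x, y} \<subseteq> U}"
  proof (cases "x \<in> U")
    case True
    then have "{y \<in> topspace X. {x, y} \<subseteq> U} = U" using sub by auto
    then show ?thesis using U by simp
  next
    case False
    then show ?thesis by simp
  qed
  show "openin X {y \<in> topspace X. {x, y} \<inter> U \<noteq> {}}"
  proof (cases "x \<in> U")
    case True
    then have "{y \<in> topspace X. {x, y} \<inter> U \<noteq> {}} = topspace X" by auto
    then show ?thesis by simp
  next
    case False
    then have "{y \<in> topspace X. {x, y} \<inter> U \<noteq> {}} = U" using sub by auto
    then show ?thesis using U by simp
  qed
qed

lemma sing_cont:
  assumes "n \<ge> 1"
  shows "continuous_map X (Fn_top n X) (\<lambda>y. {y})"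
proof (rule continuous_into_Fn)
  show "\<And>y. y \<in> topspace X \<Longrightarrow> {y} \<in> Fn_set n X" using sing_Fn[OF assms] .
  fix U assume U: "openin X U"
  have sub: "U \<subseteq> topspace X" using openin_subset[OF U] .
  have "{y \<in> topspace X. {y} \<subseteq> U} = U" using sub by auto
  then show "openin X {y \<in> topspace X. {y} \<subseteq> U}" using U by simp
  have "{y \<in> topspace X. {y} \<inter> U \<noteq> {}} = U" using sub by auto
  then show "openin X {y \<in> topspace X. {y} \<inter> U \<noteq> {}}" using U by simp
qed

lemma nonF1_open:
  assumes "Hausdorff_space X"
  shows "openin (Fn_top n X) {B\<in>Fn_set n X. B \<notin> F1_set X}"
proof (subst openin_subopen, intro ballI)
  fix B assume B: "B \<in> {B\<in>Fn_set n X. B \<notin> F1_set X}"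
  then obtain a where a: "a \<in> B" by (auto simp: Fn_set_def)
  have "B \<noteq> {a}" using B a by (auto simp: F1_set_def Fn_set_def)
  then obtain b where b: "b \<in> B" "b \<noteq> a" using a by blast
  have ab: "a \<in> topspace X" "b \<in> topspace X" using a b B by (auto simp: Fn_set_def)
  obtain U V where UV: "openin X U" "openin X V" "a \<in> U" "b \<in> V" "disjnt U V"
    using assms ab b(2) unfolding Hausdorff_space_def by metis
  let ?T = "{C\<in>Fn_set n X. C \<inter> U \<noteq> {}} \<inter> {C\<in>Fn_set n X. C \<inter> V \<noteq> {}}"
  have "openin (Fn_top n X) ?T" using openin_Fn_meet[OF UV(1)] openin_Fn_meet[OF UV(2)] by blast
  moreover have "B \<in> ?T" using B a b UV by auto
  moreover have "?T \<subseteq> {B\<in>Fn_set n X. B \<notin> F1_set X}"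
    using UV(5) by (auto simp: F1_set_def disjnt_def)
  ultimately show "\<exists>T. openin (Fn_top n X) T \<and> B \<in> T \<and> T \<subseteq> {B\<in>Fn_set n X. B \<notin> F1_set X}"
    by blast
qed

lemma F1_no_interior:
  assumes X: "compactum X" and n: "n \<ge> 2" and G: "openin (Fn_top n X) G" and B: "B \<in> G"
  shows "\<exists>C\<in>G. C \<notin> F1_set X"
proof (cases "B \<in> F1_set X")
  case False
  then show ?thesis using B by blast
next
  case True
  then obtain x where x: "x \<in> topspace X" "B = {x}" by (auto simp: F1_set_def)
  obtain T where T: "generate_topology_on ({{A \<in> Fn_set n X. A \<subseteq> U} | U. openin X U}
         \<union> {{A \<in> Fn_set n X. A \<inter> U \<noteq> {}} | U. openin X U}) T" "G = T \<inter> Fn_set n X"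
    using G unfolding Fn_top_def openin_subtopology openin_topology_generated_by_iff by blast
  have gen: "{x} \<in> T' \<longrightarrow> (\<exists>W. openin X W \<and> x \<in> W \<and> (\<forall>y\<in>W. {x,y} \<in> T'))"
    if "generate_topology_on ({{A \<in> Fn_set n X. A \<subseteq> U} | U. openin X U}
         \<union> {{A \<in> Fn_set n X. A \<inter> U \<noteq> {}} | U. openin X U}) T'" for T'
    using that
  proof (induction rule: generate_topology_on.induct)
    case Empty
    then show ?case by simp
  next
    case (Int a b)
    show ?case
    proof
      assume "{x} \<in> a \<inter> b"
      then obtain W1 W2 where "openin X W1" "x \<in> W1" "\<forall>y\<in>W1. {x,y} \<in> a"
        "openin X W2" "x \<in> W2" "\<forall>y\<in>W2. {x,y} \<in> b" using Int.IH by blast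
      then show "\<exists>W. openin X W \<and> x \<in> W \<and> (\<forall>y\<in>W. {x,y} \<in> a \<inter> b)"
        by (intro exI[of _ "W1 \<inter> W2"]) auto
    qed
  next
    case (UN K)
    show ?case
    proof
      assume "{x} \<in> \<Union>K"
      then obtain k where k: "k \<in> K" "{x} \<in> k" by blast
      then obtain W where "openin X W" "x \<in> W" "\<forall>y\<in>W. {x,y} \<in> k" using UN.IH by blast
      then show "\<exists>W. openin X W \<and> x \<in> W \<and> (\<forall>y\<in>W. {x,y} \<in> \<Union>K)"
        using k by blast
    qed
  next
    case (Basis s)
    then consider U where "openin X U" "s = {A \<in> Fn_set n X. A \<subseteq> U}"
      | U where "openin X U" "s = {A \<in> Fn_set n X. A \<inter> U \<noteq> {}}" by blast
    then show ?case
    proof cases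
      case 1
      show ?thesis
      proof
        assume "{x} \<in> s"
        then have "x \<in> U" using 1 by simp
        moreover have "\<forall>y\<in>U. {x,y} \<in> s"
          using 1 pair_Fn[OF n x(1)] openin_subset[OF 1(1)] \<open>x \<in> U\<close> by auto
        ultimately show "\<exists>W. openin X W \<and> x \<in> W \<and> (\<forall>y\<in>W. {x,y} \<in> s)" using 1 by blast
      qed
    next
      case 2
      show ?thesis
      proof
        assume "{x} \<in> s"
        then have "x \<in> U" using 2 by simp
        moreover have "\<forall>y\<in>U. {x,y} \<in> s"
          using 2 pair_Fn[OF n x(1)] openin_subset[OF 2(1)] \<open>x \<in> U\<close> by auto
        ultimately show "\<exists>W. openin X W \<and> x \<in> W \<and> (\<forall>y\<in>W. {x,y} \<in> s)" using 2 by blast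
      qed
    qed
  qed
  have "{x} \<in> T" using B x T(2) by simp
  then obtain W where W: "openin X W" "x \<in> W" "\<forall>y\<in>W. {x,y} \<in> T" using gen[OF T(1)] by blast
  have "W \<noteq> {x}" using W(1) X x(1) unfolding compactum_def by blast
  then obtain y where y: "y \<in> W" "y \<noteq> x" using W(2) by blast
  have yX: "y \<in> topspace X" using openin_subset[OF W(1)] y(1) by blast
  have "{x,y} \<in> G" using W(3) y(1) T(2) pair_Fn[OF n x(1) yX] by simp
  moreover have "{x,y} \<notin> F1_set X" using y(2) by (auto simp: F1_set_def doubleton_eq_iff)
  ultimately show ?thesis by blast
qed

definition orb :: "('b \<Rightarrow> 'b) \<Rightarrow> ('b \<Rightarrow> 'b) \<Rightarrow> 'b \<Rightarrow> 'b set" where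
  "orb a b z = {(a ^^ k) z | k. True} \<union> {(b ^^ k) z | k. True}"

lemma hm_in: "homeomorphic_maps Z Z a b \<Longrightarrow> z \<in> topspace Z \<Longrightarrow> b z \<in> topspace Z \<and> a z \<in> topspace Z"
  unfolding homeomorphic_maps_def continuous_map_def by blast

lemma inv_into_hm:
  assumes h: "homeomorphic_maps Z Z a b" and z: "z \<in> topspace Z"
  shows "inv_into (topspace Z) a z = b z"
proof -
  have inj: "inj_on a (topspace Z)"
    using h unfolding homeomorphic_maps_def by (metis inj_on_inverseI)
  have "b z \<in> topspace Z" "a (b z) = z" using h z hm_in[OF h z] unfolding homeomorphic_maps_def by auto
  then show ?thesis using inv_into_f_eq[OF inj] by blast
qed

lemma iter_inv_hm:
  assumes h: "homeomorphic_maps Z Z a b" and z: "z \<in> topspace Z"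
  shows "(inv_into (topspace Z) a ^^ k) z = (b ^^ k) z \<and> (b ^^ k) z \<in> topspace Z"
proof (induction k)
  case 0
  then show ?case using z by simp
next
  case (Suc k)
  then show ?case using inv_into_hm[OF h] hm_in[OF h] by simp
qed

lemma tst_iff:
  assumes h: "homeomorphic_maps Z Z a b"
  shows "two_sided_transitive Z a \<longleftrightarrow> (\<exists>z\<in>topspace Z. Z closure_of (orb a b z) = topspace Z)"
proof -
  have hm: "homeomorphic_map Z Z a" using h homeomorphic_map_maps by blast
  have "{(inv_into (topspace Z) a ^^ k) z | k. True} = {(b ^^ k) z | k. True}" if "z \<in> topspace Z" for z
    using iter_inv_hm[OF h that] by simp
  then show ?thesis unfolding two_sided_transitive_def orb_def using hm by auto
qed

lemma hom_F:
  assumes h: "homeomorphic_maps X X f g"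
  shows "homeomorphic_maps (Fn_top n X) (Fn_top n X) (Fn_map f) (Fn_map g)"
proof -
  have c: "continuous_map X X f" "continuous_map X X g" using h unfolding homeomorphic_maps_def by auto
  have i1: "\<forall>x\<in>topspace X. g (f x) = x" "\<forall>x\<in>topspace X. f (g x) = x"
    using h unfolding homeomorphic_maps_def by auto
  have "Fn_map g (Fn_map f A) = A" "Fn_map f (Fn_map g A) = A" if "A \<in> Fn_set n X" for A
  proof -
    have "A \<subseteq> topspace X" using that by (simp add: Fn_set_def)
    then show "Fn_map g (Fn_map f A) = A" "Fn_map f (Fn_map g A) = A"
      using i1 unfolding Fn_map_def image_comp by (auto simp: subset_iff image_iff)
  qed
  then show ?thesis unfolding homeomorphic_maps_def
    using Fn_map_cont[OF c(1)] Fn_map_cont[OF c(2)] by (simp add: topspace_Fn)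
qed

lemma SF_cont:
  assumes X: "compactum X" and fm: "f \<in> topspace X \<rightarrow> topspace X"
    and c: "continuous_map (Fn_top n X) (Fn_top n X) (Fn_map f)"
  shows "continuous_map (SFn_top n X) (SFn_top n X) (SFn_map X f)"
  unfolding continuous_map_def
proof (intro conjI allI impI)
  show "SFn_map X f \<in> topspace (SFn_top n X) \<rightarrow> topspace (SFn_top n X)"
    using SF_q[OF X fm] Fn_map_Fn[OF fm] by (auto simp: topspace_SF)
  fix V assume V: "openin (SFn_top n X) V"
  let ?P = "{c \<in> topspace (SFn_top n X). SFn_map X f c \<in> V}"
  have eq: "{A\<in>Fn_set n X. q_map X A \<in> ?P} = {A\<in>topspace (Fn_top n X). Fn_map f A \<in> {C\<in>Fn_set n X. q_map X C \<in> V}}"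
    using SF_q[OF X fm] Fn_map_Fn[OF fm] by (auto simp: topspace_SF topspace_Fn)
  have "openin (Fn_top n X) {C\<in>Fn_set n X. q_map X C \<in> V}" using V openin_SF by blast
  from openin_continuous_map_preimage[OF c this]
  have "openin (Fn_top n X) {A\<in>Fn_set n X. q_map X A \<in> ?P}"
    by (subst eq)
  then show "openin (SFn_top n X) ?P" unfolding openin_SF by (auto simp: topspace_SF)
qed

lemma hom_SF:
  assumes X: "compactum X" and h: "homeomorphic_maps X X f g"
  shows "homeomorphic_maps (SFn_top n X) (SFn_top n X) (SFn_map X f) (SFn_map X g)"
proof -
  have c: "continuous_map X X f" "continuous_map X X g" using h unfolding homeomorphic_maps_def by auto
  have fm: "f \<in> topspace X \<rightarrow> topspace X" "g \<in> topspace X \<rightarrow> topspace X"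
    using c by (auto simp: continuous_map_def)
  have hF: "homeomorphic_maps (Fn_top n X) (Fn_top n X) (Fn_map f) (Fn_map g)" using hom_F[OF h] .
  have i: "\<forall>A\<in>Fn_set n X. Fn_map g (Fn_map f A) = A" "\<forall>A\<in>Fn_set n X. Fn_map f (Fn_map g A) = A"
    using hF unfolding homeomorphic_maps_def by (auto simp: topspace_Fn)
  have "SFn_map X g (SFn_map X f c) = c" "SFn_map X f (SFn_map X g c) = c"
    if cin: "c \<in> topspace (SFn_top n X)" for c
  proof -
    obtain A where A: "A \<in> Fn_set n X" "c = q_map X A" using cin by (auto simp: topspace_SF)
    show "SFn_map X g (SFn_map X f c) = c" "SFn_map X f (SFn_map X g c) = c"
      using A i SF_q[OF X fm(1)] SF_q[OF X fm(2)] by auto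
  qed
  then show ?thesis unfolding homeomorphic_maps_def
    using SF_cont[OF X fm(1) Fn_map_cont[OF c(1)]] SF_cont[OF X fm(2) Fn_map_cont[OF c(2)]] by auto
qed

lemma Fn_iter: "(Fn_map f ^^ k) A = (f ^^ k) ` A"
  by (induction k) (auto simp: Fn_map_def image_comp)

lemma SF_iter:
  assumes X: "compactum X" and fm: "f \<in> topspace X \<rightarrow> topspace X" and A: "A \<in> Fn_set n X"
  shows "(SFn_map X f ^^ k) (q_map X A) = q_map X ((Fn_map f ^^ k) A) \<and> (Fn_map f ^^ k) A \<in> Fn_set n X"
proof (induction k)
  case 0
  then show ?case using A by simp
next
  case (Suc k)
  then show ?case using SF_q[OF X fm] Fn_map_Fn[OF fm] by simp
qed

lemma q_sat_in:
  assumes X: "compactum X" and N: "N \<subseteq> Fn_set n X" and F: "F1_set X \<subseteq> N"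
  shows "{A\<in>Fn_set n X. q_map X A \<in> q_map X ` N} = N"
proof -
  have "A \<in> N" if "A \<in> Fn_set n X" "C \<in> N" "q_map X A = q_map X C" for A C
  proof (cases "A \<in> F1_set X")
    case True then show ?thesis using F by blast
  next
    case False then show ?thesis using q_eq[OF X that(3)[symmetric] False] that(2) by simp
  qed
  then show ?thesis using N by blast
qed

lemma q_sat_out:
  assumes X: "compactum X" and N: "N \<subseteq> {B\<in>Fn_set n X. B \<notin> F1_set X}"
  shows "{A\<in>Fn_set n X. q_map X A \<in> q_map X ` N} = N"
proof -
  have "A \<in> N" if "A \<in> Fn_set n X" "C \<in> N" "q_map X A = q_map X C" for A C
  proof -
    have C: "C \<notin> F1_set X" using that(2) N by blast
    show ?thesis using q_eq[OF X that(3) C] that(2) by simp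
  qed
  then show ?thesis using N by blast
qed

lemma P2_hom_f:
  assumes X: "compactum X" and n: "n \<ge> 2" and fm: "f \<in> topspace X \<rightarrow> topspace X"
    and h: "homeomorphic_map (Fn_top n X) (Fn_top n X) (Fn_map f)"
  shows "homeomorphic_map X X f"
proof (rule continuous_imp_homeomorphic_map)
  have n1: "n \<ge> 1" using n by simp
  have inj: "inj_on (Fn_map f) (Fn_set n X)" using homeomorphic_imp_injective_map[OF h] by (simp add: topspace_Fn)
  have sur: "Fn_map f ` Fn_set n X = Fn_set n X" using homeomorphic_imp_surjective_map[OF h] by (simp add: topspace_Fn)
  have hc: "continuous_map (Fn_top n X) (Fn_top n X) (Fn_map f)" using h homeomorphic_imp_continuous_map by blast
  show "compact_space X" "Hausdorff_space X" using X by (auto simp: compactum_def)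
  show "inj_on f (topspace X)"
  proof (rule inj_onI)
    fix x y assume xy: "x \<in> topspace X" "y \<in> topspace X" "f x = f y"
    then have "Fn_map f {x} = Fn_map f {y}" by (simp add: Fn_map_def)
    then have "{x} = {y}" using inj_onD[OF inj _ sing_Fn[OF n1 xy(1)] sing_Fn[OF n1 xy(2)]] by blast
    then show "x = y" by simp
  qed
  show "f ` topspace X = topspace X"
  proof
    show "f ` topspace X \<subseteq> topspace X" using fm by blast
    show "topspace X \<subseteq> f ` topspace X"
    proof
      fix y assume y: "y \<in> topspace X"
      then have "{y} \<in> Fn_map f ` Fn_set n X" using sur sing_Fn[OF n1 y] by simp
      then obtain B where B: "B \<in> Fn_set n X" "{y} = f ` B" by (auto simp: Fn_map_def)
      then show "y \<in> f ` topspace X" by (auto simp: Fn_set_def)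
    qed
  qed
  show "continuous_map X X f"
    unfolding continuous_map_def
  proof (intro conjI allI impI)
    show "f \<in> topspace X \<rightarrow> topspace X" using fm .
    fix U assume U: "openin X U"
    have cc: "continuous_map X (Fn_top n X) (Fn_map f \<circ> (\<lambda>y. {y}))"
      using continuous_map_compose[OF sing_cont[OF n1] hc] .
    have eq: "{x \<in> topspace X. f x \<in> U} = {x\<in>topspace X. (Fn_map f \<circ> (\<lambda>y. {y})) x \<in> {A\<in>Fn_set n X. A \<subseteq> U}}"
      using sing_Fn[OF n1, where X=X] fm by (auto simp: Fn_map_def)
    show "openin X {x \<in> topspace X. f x \<in> U}"
      by (subst eq) (rule openin_continuous_map_preimage[OF cc openin_Fn_sub[OF U]])
  qed
qed

lemma P3_hom_f:
  assumes X: "compactum X" and n: "n \<ge> 2" and fm: "f \<in> topspace X \<rightarrow> topspace X"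
    and h: "homeomorphic_map (SFn_top n X) (SFn_top n X) (SFn_map X f)"
  shows "homeomorphic_map X X f"
proof (rule continuous_imp_homeomorphic_map)
  have n1: "n \<ge> 1" using n by simp
  have inj: "inj_on (SFn_map X f) (q_map X ` Fn_set n X)"
    using homeomorphic_imp_injective_map[OF h] by (simp add: topspace_SF)
  have sur: "SFn_map X f ` q_map X ` Fn_set n X = q_map X ` Fn_set n X"
    using homeomorphic_imp_surjective_map[OF h] by (simp add: topspace_SF)
  have hc: "continuous_map (SFn_top n X) (SFn_top n X) (SFn_map X f)"
    using h homeomorphic_imp_continuous_map by blast
  show cs: "compact_space X" and hs: "Hausdorff_space X" using X by (auto simp: compactum_def)
  have pairnF1: "{x,y} \<notin> F1_set X" if "x \<noteq> y" for x y
    using that by (auto simp: F1_set_def doubleton_eq_iff)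
  show "inj_on f (topspace X)"
  proof (rule inj_onI, rule ccontr)
    fix x y assume xy: "x \<in> topspace X" "y \<in> topspace X" "f x = f y" "x \<noteq> y"
    have B: "{x,y} \<in> Fn_set n X" using pair_Fn[OF n xy(1,2)] .
    have "SFn_map X f (q_map X {x,y}) = q_map X {f x}"
      using SF_q[OF X fm] xy(3) by (simp add: Fn_map_def)
    also have "\<dots> = F1_set X" using fm xy(1) by (auto simp: q_map_def F1_set_def)
    also have "\<dots> = SFn_map X f (q_map X {x})" by (simp add: SFn_map_def q_map_def F1_set_def xy(1))
    finally have "q_map X {x,y} = q_map X {x}"
      using inj_onD[OF inj] B sing_Fn[OF n1 xy(1)] by blast
    also have "\<dots> = F1_set X" using xy(1) by (auto simp: q_map_def F1_set_def)
    finally show False using q_neq_F1[OF X pairnF1[OF xy(4)]] by simp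
  qed
  show "f ` topspace X = topspace X"
  proof
    show "f ` topspace X \<subseteq> topspace X" using fm by blast
    show "topspace X \<subseteq> f ` topspace X"
    proof
      fix y assume y: "y \<in> topspace X"
      obtain a b where ab: "a \<in> topspace X" "b \<in> topspace X" "a \<noteq> b" using X by (auto simp: compactum_def)
      obtain z where z: "z \<in> topspace X" "z \<noteq> y" using ab by metis
      have B: "{y,z} \<in> Fn_set n X" using pair_Fn[OF n y z(1)] .
      then have "q_map X {y,z} \<in> SFn_map X f ` q_map X ` Fn_set n X" using sur by simp
      then obtain A where A: "A \<in> Fn_set n X" "q_map X {y,z} = SFn_map X f (q_map X A)" by auto
      then have "q_map X (Fn_map f A) = q_map X {y,z}" using SF_q[OF X fm] by simp
      then have "Fn_map f A = {y,z}" using q_eq[OF X _ pairnF1] z(2) by metis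
      then have "y \<in> f ` A" by (auto simp: Fn_map_def)
      then show "y \<in> f ` topspace X" using A by (auto simp: Fn_set_def)
    qed
  qed
  show "continuous_map X X f"
    unfolding continuous_map_def
  proof (intro conjI allI impI)
    show "f \<in> topspace X \<rightarrow> topspace X" using fm .
    fix U assume U: "openin X U"
    show "openin X {x \<in> topspace X. f x \<in> U}"
    proof (subst openin_subopen, intro ballI)
      fix x assume "x \<in> {x \<in> topspace X. f x \<in> U}"
      then have x: "x \<in> topspace X" "f x \<in> U" by auto
      have fx: "f x \<in> topspace X" using fm x(1) by blast
      let ?C = "topspace X - U"
      have "closedin X ?C" using U by blast
      then have Cc: "compactin X ?C" using closedin_compact_space[OF cs] by blast
      have "disjnt {f x} ?C" using x(2) by auto
      then obtain U1 V where UV: "openin X U1" "openin X V" "{f x} \<subseteq> U1" "?C \<subseteq> V" "disjnt U1 V"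
        using Hausdorff_space_compact_separation[OF hs _ Cc] fx by (metis compactin_sing)
      let ?W = "{B\<in>Fn_set n X. B \<subseteq> U} \<union> {B\<in>Fn_set n X. B \<subseteq> V}"
      have Wo: "openin (Fn_top n X) ?W" using openin_Fn_sub[OF U] openin_Fn_sub[OF UV(2)] by blast
      have F1W: "F1_set X \<subseteq> ?W" using UV(4) sing_Fn[OF n1, where X=X] by (auto simp: F1_set_def)
      have Wsat: "{A\<in>Fn_set n X. q_map X A \<in> q_map X ` ?W} = ?W"
        using q_sat_in[OF X _ F1W] by blast
      have "openin (SFn_top n X) (q_map X ` ?W)"
        unfolding openin_SF Wsat using Wo by blast
      from openin_continuous_map_preimage[OF hc this]
      have "openin (Fn_top n X) {A\<in>Fn_set n X. q_map X A \<in> {c \<in> topspace (SFn_top n X). SFn_map X f c \<in> q_map X ` ?W}}"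
        unfolding openin_SF by blast
      from openin_continuous_map_preimage[OF pair_cont[OF n x(1)] this]
      have No: "openin X {y \<in> topspace X. {x,y} \<in> {A\<in>Fn_set n X. q_map X A \<in> {c \<in> topspace (SFn_top n X). SFn_map X f c \<in> q_map X ` ?W}}}" .
      have "{x,y} \<in> {A\<in>Fn_set n X. q_map X A \<in> {c \<in> topspace (SFn_top n X). SFn_map X f c \<in> q_map X ` ?W}}
            \<longleftrightarrow> f y \<in> U" if y: "y \<in> topspace X" for y
      proof -
        have P: "{x,y} \<in> Fn_set n X" using pair_Fn[OF n x(1) y] .
        have FP: "Fn_map f {x,y} \<in> Fn_set n X" using Fn_map_Fn[OF fm P] .
        have "{x,y} \<in> {A\<in>Fn_set n X. q_map X A \<in> {c \<in> topspace (SFn_top n X). SFn_map X f c \<in> q_map X ` ?W}}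
           \<longleftrightarrow> q_map X (Fn_map f {x,y}) \<in> q_map X ` ?W"
          using P SF_q[OF X fm] by (auto simp: topspace_SF)
        also have "\<dots> \<longleftrightarrow> Fn_map f {x,y} \<in> ?W"
          using Wsat FP by blast
        also have "\<dots> \<longleftrightarrow> f y \<in> U"
          using FP x(2) UV(3,5) by (auto simp: Fn_map_def disjnt_def)
        finally show ?thesis .
      qed
      then have "{y \<in> topspace X. {x,y} \<in> {A\<in>Fn_set n X. q_map X A \<in> {c \<in> topspace (SFn_top n X). SFn_map X f c \<in> q_map X ` ?W}}}
          = {x \<in> topspace X. f x \<in> U}" by blast
      then show "\<exists>T. openin X T \<and> x \<in> T \<and> T \<subseteq> {x \<in> topspace X. f x \<in> U}"
        using No x by (intro exI[of _ "{x \<in> topspace X. f x \<in> U}"]) simp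
    qed
  qed
qed

lemma main_hf:
  assumes X: "compactum X" and n: "n \<ge> 2" and hf: "homeomorphic_map X X f"
  shows "(two_sided_transitive (Fn_top n X) (Fn_map f)
            \<longleftrightarrow> two_sided_transitive (SFn_top n X) (SFn_map X f))
       \<and> (two_sided_transitive (Fn_top n X) (Fn_map f) \<longrightarrow> two_sided_transitive X f)"
proof -
  have n1: "n \<ge> 1" using n by simp
  obtain g where h: "homeomorphic_maps X X f g" using hf homeomorphic_map_maps by blast
  have fm: "f \<in> topspace X \<rightarrow> topspace X" "g \<in> topspace X \<rightarrow> topspace X"
    using h unfolding homeomorphic_maps_def continuous_map_def by auto
  have hF: "homeomorphic_maps (Fn_top n X) (Fn_top n X) (Fn_map f) (Fn_map g)" using hom_F[OF h] .
  have hS: "homeomorphic_maps (SFn_top n X) (SFn_top n X) (SFn_map X f) (SFn_map X g)" using hom_SF[OF X h] .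
  have E2: "two_sided_transitive (Fn_top n X) (Fn_map f) \<longleftrightarrow>
     (\<exists>A\<in>Fn_set n X. Fn_top n X closure_of (orb (Fn_map f) (Fn_map g) A) = Fn_set n X)"
    using tst_iff[OF hF] by (simp add: topspace_Fn)
  have E3: "two_sided_transitive (SFn_top n X) (SFn_map X f) \<longleftrightarrow>
     (\<exists>c\<in>q_map X ` Fn_set n X. SFn_top n X closure_of (orb (SFn_map X f) (SFn_map X g) c) = q_map X ` Fn_set n X)"
    using tst_iff[OF hS] by (simp add: topspace_SF)
  have E1: "two_sided_transitive X f \<longleftrightarrow> (\<exists>x\<in>topspace X. X closure_of (orb f g x) = topspace X)"
    using tst_iff[OF h] .
  have orbq: "orb (SFn_map X f) (SFn_map X g) (q_map X A) = q_map X ` orb (Fn_map f) (Fn_map g) A"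
    if A: "A \<in> Fn_set n X" for A
  proof -
    have "{(SFn_map X f ^^ k) (q_map X A) |k. True} = q_map X ` {(Fn_map f ^^ k) A |k. True}"
      using SF_iter[OF X fm(1) A] by blast
    moreover have "{(SFn_map X g ^^ k) (q_map X A) |k. True} = q_map X ` {(Fn_map g ^^ k) A |k. True}"
      using SF_iter[OF X fm(2) A] by blast
    ultimately show ?thesis unfolding orb_def by (simp add: image_Un)
  qed
  let ?N = "{B\<in>Fn_set n X. B \<notin> F1_set X}"
  have hs: "Hausdorff_space X" using X by (simp add: compactum_def)
  have qNo: "openin (SFn_top n X) (q_map X ` N)" if "openin (Fn_top n X) N" "N \<subseteq> ?N" for N
    unfolding openin_SF q_sat_out[OF X that(2)] using that by blast
  have D1: "two_sided_transitive (SFn_top n X) (SFn_map X f)"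
    if A: "A \<in> Fn_set n X" "Fn_top n X closure_of (orb (Fn_map f) (Fn_map g) A) = Fn_set n X" for A
  proof -
    have "q_map X ` Fn_set n X \<subseteq> SFn_top n X closure_of (q_map X ` orb (Fn_map f) (Fn_map g) A)"
      using continuous_map_image_closure_subset[OF q_cont[where n=n and X=X], of "orb (Fn_map f) (Fn_map g) A"] A(2) by simp
    then have "SFn_top n X closure_of (orb (SFn_map X f) (SFn_map X g) (q_map X A)) = q_map X ` Fn_set n X"
      using closure_of_subset_topspace[of "SFn_top n X"] orbq[OF A(1)] unfolding topspace_SF by (metis subset_antisym)
    then show ?thesis using E3 A(1) by blast
  qed
  have D2: "two_sided_transitive (Fn_top n X) (Fn_map f)"
    if c: "c \<in> q_map X ` Fn_set n X" "SFn_top n X closure_of (orb (SFn_map X f) (SFn_map X g) c) = q_map X ` Fn_set n X" for c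
  proof -
    obtain A where A: "A \<in> Fn_set n X" "c = q_map X A" using c(1) by blast
    have dense: "orb (SFn_map X f) (SFn_map X g) c \<inter> T \<noteq> {}" if "openin (SFn_top n X) T" "T \<noteq> {}" for T
      using c(2) dense_intersects_open[of "SFn_top n X"] that by (auto simp: topspace_SF)
    show ?thesis
    proof (cases "A \<in> F1_set X")
      case True
      then have cF: "c = F1_set X" using A by (simp add: q_F1)
      have "(SFn_map X f ^^ k) (F1_set X) = F1_set X" for k by (induction k) (auto simp: SFn_map_def)
      moreover have "(SFn_map X g ^^ k) (F1_set X) = F1_set X" for k by (induction k) (auto simp: SFn_map_def)
      ultimately have oF: "orb (SFn_map X f) (SFn_map X g) c = {F1_set X}" unfolding orb_def cF by auto
      obtain a b where ab: "a \<in> topspace X" "b \<in> topspace X" "a \<noteq> b" using X by (auto simp: compactum_def)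
      have "{a,b} \<in> ?N" using pair_Fn[OF n ab(1,2)] ab(3) by (auto simp: F1_set_def doubleton_eq_iff)
      then have "q_map X ` ?N \<noteq> {}" by blast
      moreover have "openin (SFn_top n X) (q_map X ` ?N)" using qNo[OF nonF1_open[OF hs]] by blast
      ultimately have "{F1_set X} \<inter> q_map X ` ?N \<noteq> {}" using dense oF by metis
      then show ?thesis using q_neq_F1[OF X] by auto
    next
      case False
      have "Fn_top n X closure_of (orb (Fn_map f) (Fn_map g) A) = topspace (Fn_top n X)"
        unfolding dense_intersects_open
      proof (intro allI impI)
        fix G assume G: "openin (Fn_top n X) G \<and> G \<noteq> {}"
        then obtain B where "B \<in> G" by blast
        then obtain C where C: "C \<in> G" "C \<notin> F1_set X" using F1_no_interior[OF X n] G by blast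
        have GF: "G \<subseteq> Fn_set n X" using openin_subset[of "Fn_top n X" G] G by (simp add: topspace_Fn)
        have G'o: "openin (Fn_top n X) (G \<inter> ?N)" using G nonF1_open[OF hs] by blast
        have "openin (SFn_top n X) (q_map X ` (G \<inter> ?N))" using qNo[OF G'o] by blast
        moreover have "q_map X ` (G \<inter> ?N) \<noteq> {}" using C GF by blast
        ultimately have "orb (SFn_map X f) (SFn_map X g) c \<inter> q_map X ` (G \<inter> ?N) \<noteq> {}" using dense by blast
        then have "q_map X ` orb (Fn_map f) (Fn_map g) A \<inter> q_map X ` (G \<inter> ?N) \<noteq> {}"
          using orbq[OF A(1)] A(2) by simp
        then obtain B D where BD: "B \<in> orb (Fn_map f) (Fn_map g) A" "D \<in> G \<inter> ?N" "q_map X B = q_map X D"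
          by blast
        then have "B = D" using q_eq[OF X] by blast
        then show "orb (Fn_map f) (Fn_map g) A \<inter> G \<noteq> {}" using BD by blast
      qed
      then show ?thesis using E2 A(1) unfolding topspace_Fn by blast
    qed
  qed
  have D3: "two_sided_transitive X f"
    if A: "A \<in> Fn_set n X" "Fn_top n X closure_of (orb (Fn_map f) (Fn_map g) A) = Fn_set n X" for A
  proof -
    obtain a where a: "a \<in> A" using A(1) by (auto simp: Fn_set_def)
    have aX: "a \<in> topspace X" using a A(1) by (auto simp: Fn_set_def)
    have dense: "orb (Fn_map f) (Fn_map g) A \<inter> T \<noteq> {}" if "openin (Fn_top n X) T" "T \<noteq> {}" for T
      using A(2) dense_intersects_open[of "Fn_top n X"] that by (auto simp: topspace_Fn)
    have "X closure_of (orb f g a) = topspace X"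
      unfolding dense_intersects_open
    proof (intro allI impI)
      fix U assume U: "openin X U \<and> U \<noteq> {}"
      then obtain u where u: "u \<in> U" by blast
      have uX: "u \<in> topspace X" using u U openin_subset by blast
      have "{u} \<in> {B\<in>Fn_set n X. B \<subseteq> U}" using sing_Fn[OF n1 uX] u by simp
      then have "orb (Fn_map f) (Fn_map g) A \<inter> {B\<in>Fn_set n X. B \<subseteq> U} \<noteq> {}"
        using dense openin_Fn_sub U by blast
      then obtain E where E: "E \<in> orb (Fn_map f) (Fn_map g) A" "E \<subseteq> U" by blast
      then obtain k where "E = (f ^^ k) ` A \<or> E = (g ^^ k) ` A" unfolding orb_def Fn_iter by blast
      then have "(f ^^ k) a \<in> U \<or> (g ^^ k) a \<in> U" using E(2) a by blast
      then show "orb f g a \<inter> U \<noteq> {}" unfolding orb_def by blast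
    qed
    then show ?thesis using E1 aX by blast
  qed
  show ?thesis using D1 D2 D3 E2 E3 by blast
qed

theorem theorem22:
  fixes X :: "'a topology" and n :: nat and f :: "'a \<Rightarrow> 'a"
  assumes "compactum X" and "n \<ge> 2" and "f \<in> topspace X \<rightarrow> topspace X"
  shows "(two_sided_transitive (Fn_top n X) (Fn_map f)
            \<longleftrightarrow> two_sided_transitive (SFn_top n X) (SFn_map X f))
       \<and> (two_sided_transitive (Fn_top n X) (Fn_map f) \<longrightarrow> two_sided_transitive X f)"
proof (cases "homeomorphic_map X X f")
  case True
  then show ?thesis using main_hf[OF assms(1,2)] by blast
next
  case False
  have "\<not> two_sided_transitive (Fn_top n X) (Fn_map f)"
    using P2_hom_f[OF assms] False unfolding two_sided_transitive_def by blast
  moreover have "\<not> two_sided_transitive (SFn_top n X) (SFn_map X f)"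
    using P3_hom_f[OF assms] False unfolding two_sided_transitive_def by blast
  ultimately show ?thesis by blast
qed

end
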